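(* Let $n=m=1$ (scalars $A\neq0$, $B\neq0$, $Q,R>0$) in the setting of the context, assume $q<q_c$, and let $\beta\in(0,1)$. If $$N_q>\frac{\log(2/\beta)A^4B^4P^4(R+B^2P)^2}{[Q(R+B^2P)^2+(1-q)RA^2B^2P^2]^2},$$ where $P>0$ solves $P=Q+A^2P-(1-q)(R+B^2P)^{-1}A^2B^2P^2$, then with probability at least $1-\beta$ (over the samples) the following holds: if $\hat q<q_c$, then $\hat K$ mean-square stabilizes the system.
   Context: Consider the scalar system $x_{t+1}=Ax_t+\lambda_tBu_t$, $t\ge0$, with $(A,B)$ stabilizable, $x_0$ random with finite mean and variance and $\{\lambda_t\}$ i.i.d. Bernoulli, independent of $x_0$, with $\mathcal{P}(\lambda_t=0)=q$, $q\in(0,1)$ unknown. The estimate is $\hat q=\frac1{N_q}\sum_{i=1}^{N_q}(1-\lambda_i)$ from $N_q$ i.i.d. samples with the same Bernoulli law. For $p\in[0,1)$ the modified Riccati equation with parameter $p$ is $X=Q+A^2X-(1-p)(R+B^2X)^{-1}A^2B^2X^2$; $q_c$ is the critical loss probability such that for every $p\in[0,q_c)$ this equation has a unique positive solution. For $\hat q\in[0,q_c)$ let $\hat P$ be the positive solution for parameter $\hat q$ and $\hat K=-(R+B^2\hat P)^{-1}AB\hat P$. $\hat K$ mean-square stabilizes the system if the closed loop $x_{t+1}=(A+\lambda_tB\hat K)x_t$ satisfies $\lim_{t\to\infty}\mathbb{E}\{x_t^2\}=0$. *)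

theory Defs
  imports "HOL-Probability.Probability"
begin

definition mare :: "real \<Rightarrow> real \<Rightarrow> real \<Rightarrow> real \<Rightarrow> real \<Rightarrow> real \<Rightarrow> bool" where
  "mare A B Q R p X \<longleftrightarrow>
     X = Q + A^2 * X - (1 - p) * inverse (R + B^2 * X) * A^2 * B^2 * X^2"

definition qcrit :: "real \<Rightarrow> real \<Rightarrow> real \<Rightarrow> real \<Rightarrow> real" where
  "qcrit A B Q R = Sup {r. 0 \<le> r \<and> r \<le> 1 \<and>
      (\<forall>p. 0 \<le> p \<and> p < r \<longrightarrow> (\<exists>!X. X > 0 \<and> mare A B Q R p X))}"

definition mare_sol :: "real \<Rightarrow> real \<Rightarrow> real \<Rightarrow> real \<Rightarrow> real \<Rightarrow> real" where
  "mare_sol A B Q R p = (THE X. X > 0 \<and> mare A B Q R p X)"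

definition gain :: "real \<Rightarrow> real \<Rightarrow> real \<Rightarrow> real \<Rightarrow> real \<Rightarrow> real" where
  "gain A B Q R p = - inverse (R + B^2 * mare_sol A B Q R p) * A * B * mare_sol A B Q R p"

definition xcl :: "real \<Rightarrow> real \<Rightarrow> real \<Rightarrow> real \<Rightarrow> (nat \<Rightarrow> bool) \<Rightarrow> nat \<Rightarrow> real" where
  "xcl A B K x0 lam t = x0 * (\<Prod>i<t. A + (if lam i then 1 else 0) * B * K)"

definition lam_law :: "real \<Rightarrow> nat set \<Rightarrow> (nat \<Rightarrow> bool) pmf" where
  "lam_law q I = Pi_pmf I False (\<lambda>_. bernoulli_pmf (1 - q))"

text \<open>Mean-square stabilization: for every initial distribution with finite second moment
  (hence finite mean and variance), independent of the losses, E[x_t^2] \<rightarrow> 0.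
  E[x_t^2] only depends on lambda_0..lambda_{t-1}, so it is computed over their finite product law.\<close>
definition ms_stabilizes :: "real \<Rightarrow> real \<Rightarrow> real \<Rightarrow> real \<Rightarrow> bool" where
  "ms_stabilizes q A B K \<longleftrightarrow>
     (\<forall>\<mu> :: real measure. prob_space \<mu> \<and> sets \<mu> = sets borel \<and> integrable \<mu> (\<lambda>x. x^2) \<longrightarrow>
        (\<lambda>t. \<integral>\<^sup>+ z. ennreal ((xcl A B K (fst z) (snd z) t)^2)
               \<partial>(\<mu> \<Otimes>\<^sub>M measure_pmf (lam_law q {..<t}))) \<longlonglongrightarrow> 0)"

definition qhat :: "nat \<Rightarrow> (nat \<Rightarrow> bool) \<Rightarrow> real" where
  "qhat N s = (\<Sum>i\<in>{1..N}. 1 - (if s i then 1 else 0)) / real N"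

end

theory Submission imports Defs begin

lemma ms_stab_lemma:
  fixes q A B K :: real
  assumes q0: "0 \<le> q" and q1: "q \<le> 1"
    and rho: "q * A^2 + (1 - q) * (A + B * K)^2 < 1"
  shows "ms_stabilizes q A B K"
  unfolding ms_stabilizes_def
proof (intro allI impI, elim conjE)
  fix \<mu> :: "real measure"
  assume ps: "prob_space \<mu>" and sb: "sets \<mu> = sets borel" and int: "integrable \<mu> (\<lambda>x. x^2)"
  define \<rho> where "\<rho> = q * A^2 + (1 - q) * (A + B * K)^2"
  have \<rho>0: "0 \<le> \<rho>" unfolding \<rho>_def using q0 q1 by (intro add_nonneg_nonneg mult_nonneg_nonneg) auto
  have \<rho>1: "\<rho> < 1" using rho \<rho>_def by simp
  define c where "c = (\<integral>x. x^2 \<partial>\<mu>)"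
  have c0: "0 \<le> c" unfolding c_def by (intro integral_nonneg_AE) auto
  have cnn: "(\<integral>\<^sup>+x. ennreal (x^2) \<partial>\<mu>) = ennreal c"
    unfolding c_def by (intro nn_integral_eq_integral int) auto
  define g where "g = (\<lambda>b::bool. (A + (if b then 1 else 0) * B * K)^2)"
  have g0: "\<And>b. 0 \<le> g b" unfolding g_def by simp
  have meas: "(\<lambda>x::real. ennreal (x^2)) \<in> borel_measurable \<mu>"
  proof -
    have "(\<lambda>x::real. ennreal (x^2)) \<in> borel_measurable borel" by measurable
    then show ?thesis by (simp add: measurable_cong_sets[OF sb refl])
  qed
  have eq: "(\<integral>\<^sup>+ z. ennreal ((xcl A B K (fst z) (snd z) t)^2) \<partial>(\<mu> \<Otimes>\<^sub>M measure_pmf (lam_law q {..<t})))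
        = ennreal (c * \<rho> ^ t)" for t
  proof -
    let ?L = "measure_pmf (lam_law q {..<t})"
    have sf: "sigma_finite_measure ?L" by (simp add: prob_space_imp_sigma_finite measure_pmf.prob_space_axioms)
    have pt: "\<And>x lam. ennreal ((xcl A B K x lam t)^2) = ennreal (x^2) * ennreal (\<Prod>i<t. g (lam i))"
      unfolding xcl_def g_def by (simp add: power_mult_distrib prod_power_distrib[symmetric] ennreal_mult')
    have m2: "(\<lambda>z. ennreal ((fst z)^2) * ennreal (\<Prod>i<t. g (snd z i))) \<in> borel_measurable (\<mu> \<Otimes>\<^sub>M ?L)"
    proof -
      have "(\<lambda>z. ennreal ((fst z)^2)) \<in> borel_measurable (\<mu> \<Otimes>\<^sub>M ?L)"
        using measurable_compose[OF measurable_fst meas] by (simp add: o_def)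
      moreover have "(\<lambda>z. ennreal (\<Prod>i<t. g (snd z i))) \<in> borel_measurable (\<mu> \<Otimes>\<^sub>M ?L)"
      proof -
        have "(\<lambda>lam. ennreal (\<Prod>i<t. g (lam i))) \<in> borel_measurable ?L" by simp
        from measurable_compose[OF measurable_snd this] show ?thesis by assumption
      qed
      ultimately show ?thesis by (rule borel_measurable_times_ennreal)
    qed
    have "(\<integral>\<^sup>+ z. ennreal ((xcl A B K (fst z) (snd z) t)^2) \<partial>(\<mu> \<Otimes>\<^sub>M ?L))
        = (\<integral>\<^sup>+ z. ennreal ((fst z)^2) * ennreal (\<Prod>i<t. g (snd z i)) \<partial>(\<mu> \<Otimes>\<^sub>M ?L))"
      using pt by simp
    also have "\<dots> = (\<integral>\<^sup>+ x. \<integral>\<^sup>+ lam. ennreal (x^2) * ennreal (\<Prod>i<t. g (lam i)) \<partial>?L \<partial>\<mu>)"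
      using sigma_finite_measure.nn_integral_fst[OF sf m2] by simp
    also have "\<dots> = (\<integral>\<^sup>+ x. ennreal (x^2) * (\<integral>\<^sup>+ lam. ennreal (\<Prod>i<t. g (lam i)) \<partial>?L) \<partial>\<mu>)"
      by (simp add: nn_integral_cmult)
    also have "\<dots> = (\<integral>\<^sup>+ x. ennreal (x^2) \<partial>\<mu>) * (\<integral>\<^sup>+ lam. ennreal (\<Prod>i<t. g (lam i)) \<partial>?L)"
      by (rule nn_integral_multc[OF meas])
    also have "(\<integral>\<^sup>+ lam. ennreal (\<Prod>i<t. g (lam i)) \<partial>?L) = (\<integral>\<^sup>+ lam. (\<Prod>i<t. ennreal (g (lam i))) \<partial>?L)"
      by (simp add: prod_ennreal g0)
    also have "\<dots> = (\<Prod>i<t. \<integral>\<^sup>+ b. ennreal (g b) \<partial>measure_pmf (bernoulli_pmf (1 - q)))"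
      unfolding lam_law_def by (rule nn_integral_prod_Pi_pmf) simp
    also have "\<dots> = (\<Prod>i<t. ennreal \<rho>)"
    proof (rule prod.cong[OF refl])
      fix i
      have "(\<integral>\<^sup>+ b. ennreal (g b) \<partial>measure_pmf (bernoulli_pmf (1 - q))) = ennreal (g True) * (1 - q) + ennreal (g False) * (1 - (1 - q))"
        using q0 q1 by (subst nn_integral_bernoulli_pmf) auto
      also have "\<dots> = ennreal (g True * (1 - q)) + ennreal (g False * q)"
        using g0 q0 q1 by (simp add: ennreal_mult)
      also have "\<dots> = ennreal (g True * (1 - q) + g False * q)"
        by (rule ennreal_plus[symmetric]) (use g0 q0 q1 in auto)
      also have "\<dots> = ennreal \<rho>" by (simp add: \<rho>_def g_def algebra_simps)
      finally show "(\<integral>\<^sup>+ b. ennreal (g b) \<partial>measure_pmf (bernoulli_pmf (1 - q))) = ennreal \<rho>" .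
    qed
    also have "\<dots> = ennreal (\<rho> ^ t)" using \<rho>0 by (simp add: prod_ennreal ennreal_power)
    finally show ?thesis using cnn c0 \<rho>0 by (simp add: ennreal_mult)
  qed
  have "(\<lambda>t. c * \<rho> ^ t) \<longlonglongrightarrow> 0"
    using LIMSEQ_power_zero[of \<rho>] \<rho>0 \<rho>1 by (auto intro: tendsto_mult_right_zero)
  then have "(\<lambda>t. ennreal (c * \<rho> ^ t)) \<longlonglongrightarrow> ennreal 0" by (rule tendsto_ennrealI)
  then show "(\<lambda>t. \<integral>\<^sup>+ z. ennreal ((xcl A B K (fst z) (snd z) t)^2) \<partial>(\<mu> \<Otimes>\<^sub>M measure_pmf (lam_law q {..<t}))) \<longlonglongrightarrow> 0"
    unfolding eq by simp
qed

lemma qcrit_unique: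
  assumes "0 \<le> p" "p < qcrit A B Q R"
  shows "\<exists>!X. X > 0 \<and> mare A B Q R p X"
proof -
  define S where "S = {r. 0 \<le> r \<and> r \<le> 1 \<and>
      (\<forall>p. 0 \<le> p \<and> p < r \<longrightarrow> (\<exists>!X. X > 0 \<and> mare A B Q R p X))}"
  have "0 \<in> S" unfolding S_def by auto
  then have ne: "S \<noteq> {}" by blast
  have bdd: "bdd_above S" unfolding S_def by (rule bdd_aboveI[of _ 1]) auto
  have "p < Sup S" using assms(2) unfolding qcrit_def S_def by simp
  then obtain r where "r \<in> S" "p < r" using less_cSup_iff[OF ne bdd] by blast
  then show ?thesis using assms(1) unfolding S_def by blast
qed

lemma mare_sol_props:
  assumes "0 \<le> p" "p < qcrit A B Q R"
  shows "mare_sol A B Q R p > 0 \<and> mare A B Q R p (mare_sol A B Q R p)"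
  unfolding mare_sol_def by (rule theI'[OF qcrit_unique[OF assms]])

lemma mare_eq1:
  fixes X :: real
  assumes "X > 0" "R > 0" "mare A B Q R p X"
  shows "1 = Q / X + A^2 - (1 - p) * A^2 * (B^2 * X / (R + B^2 * X))"
proof -
  have W: "R + B^2 * X > 0" using assms by (simp add: add_pos_nonneg)
  from assms(3) have "X = Q + A^2 * X - (1 - p) * inverse (R + B^2 * X) * A^2 * B^2 * X^2"
    unfolding mare_def .
  then have e2: "X * (R + B^2 * X) = Q * (R + B^2 * X) + A^2 * X * (R + B^2 * X) - (1 - p) * A^2 * B^2 * X^2"
    using W by (simp add: field_simps)
  have "Q / X + A^2 - (1 - p) * A^2 * (B^2 * X / (R + B^2 * X))
      = (Q * (R + B^2 * X) + A^2 * X * (R + B^2 * X) - (1 - p) * A^2 * B^2 * X^2) / (X * (R + B^2 * X))"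
    using W assms(1) by (simp add: field_simps power2_eq_square)
  also have "\<dots> = 1" unfolding e2[symmetric] using W assms(1) by simp
  finally show ?thesis by simp
qed

lemma rho_identity:
  fixes X :: real
  assumes "X > 0" "R > 0" "mare A B Q R p X"
  defines "W \<equiv> R + B^2 * X"
  shows "X * W^2 * (1 - (q * A^2 + (1 - q) * (A * R / W)^2))
     = Q * W^2 + A^2 * B^2 * X^2 * ((1 - q) * R - (q - p) * W)"
proof -
  have W: "W > 0" using assms unfolding W_def by (simp add: add_pos_nonneg)
  from assms(3) have e: "X = Q + A^2 * X - (1 - p) * inverse W * A^2 * B^2 * X^2"
    unfolding mare_def W_def .
  have e2: "X * W = Q * W + A^2 * X * W - (1 - p) * A^2 * B^2 * X^2"
    using e W by (simp add: field_simps)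
  have "X * W^2 * (1 - (q * A^2 + (1 - q) * (A * R / W)^2))
      = X * W * W - q * A^2 * X * W^2 - (1 - q) * A^2 * R^2 * X"
    using W by (simp add: field_simps power2_eq_square)
  also have "\<dots> = (Q * W + A^2 * X * W - (1 - p) * A^2 * B^2 * X^2) * W - q * A^2 * X * W^2 - (1 - q) * A^2 * R^2 * X"
    using e2 by simp
  also have "\<dots> = Q * W^2 + A^2 * B^2 * X^2 * ((1 - q) * R - (q - p) * W)"
    unfolding W_def by (simp add: algebra_simps power2_eq_square)
  finally show ?thesis .
qed

lemma mare_mono:
  fixes X P :: real
  assumes "A \<noteq> 0" "B \<noteq> 0" "Q > 0" "R > 0" "p < q" "q < 1"
    "X > 0" "P > 0" "mare A B Q R p X" "mare A B Q R q P"
  shows "X \<le> P"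
proof (rule ccontr)
  assume "\<not> X \<le> P"
  hence XP: "P < X" by simp
  have e1: "1 = Q / X + A^2 - (1 - p) * A^2 * (B^2 * X / (R + B^2 * X))"
    using mare_eq1[OF assms(7) assms(4) assms(9)] .
  have e2: "1 = Q / P + A^2 - (1 - q) * A^2 * (B^2 * P / (R + B^2 * P))"
    using mare_eq1[OF assms(8) assms(4) assms(10)] .
  have WX: "R + B^2 * X > 0" "R + B^2 * P > 0" using assms by (simp_all add: add_pos_nonneg)
  have B2: "B^2 > 0" "A^2 > 0" using assms by simp_all
  have q1: "Q / X < Q / P" using assms XP by (simp add: divide_strict_left_mono)
  have u: "B^2 * P / (R + B^2 * P) \<le> B^2 * X / (R + B^2 * X)"
  proof -
    have "B^2 * P * (R + B^2 * X) \<le> B^2 * X * (R + B^2 * P)"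
      using XP B2 assms by (simp add: algebra_simps)
    then show ?thesis using WX by (simp add: divide_simps)
  qed
  have up: "0 \<le> B^2 * P / (R + B^2 * P)" using WX B2 assms by simp
  have "(1 - q) * (B^2 * P / (R + B^2 * P)) \<le> (1 - p) * (B^2 * X / (R + B^2 * X))"
    using u up assms by (intro mult_mono) auto
  then have "A^2 * ((1 - q) * (B^2 * P / (R + B^2 * P))) \<le> A^2 * ((1 - p) * (B^2 * X / (R + B^2 * X)))"
    using B2 by (intro mult_left_mono) auto
  then have "(1 - q) * A^2 * (B^2 * P / (R + B^2 * P)) \<le> (1 - p) * A^2 * (B^2 * X / (R + B^2 * X))"
    by (simp only: ac_simps)
  then show False using e1 e2 q1 by linarith
qed

lemma hoeff_lower:
  fixes q \<delta> :: real and N :: nat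
  assumes q0: "0 \<le> q" and q1: "q \<le> 1" and N: "N > 0" and d: "\<delta> \<ge> 0"
  shows "measure_pmf.prob (lam_law q {1..N}) {s. qhat N s \<le> q - \<delta>} \<le> exp (-2 * real N * \<delta>^2)"
proof -
  define L where "L = lam_law q {1..N}"
  define X where "X = (\<lambda>(i::nat) (s::nat \<Rightarrow> bool). if s i then 0 else (1::real))"
  have EX: "measure_pmf.expectation L (X i) = q" if i: "i \<in> {1..N}" for i
  proof -
    have "measure_pmf.expectation L (X i) = measure_pmf.expectation (map_pmf (\<lambda>f. f i) L) (\<lambda>b. if b then 0 else 1::real)"
      by (simp add: X_def)
    also have "map_pmf (\<lambda>f. f i) L = bernoulli_pmf (1 - q)"
      unfolding L_def lam_law_def using i by (subst Pi_pmf_component) auto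
    finally show ?thesis using q0 q1 by simp
  qed
  interpret H: Hoeffding_ineq "measure_pmf L" "{1..N}" X "\<lambda>_. 0" "\<lambda>_. 1"
     "\<Sum>i\<in>{1..N}. measure_pmf.expectation L (X i)"
  proof unfold_locales
    show "prob_space.indep_vars (measure_pmf L) (\<lambda>_. borel) X {1..N}"
      unfolding L_def lam_law_def X_def
      by (intro prob_space.indep_vars_compose2[OF _ indep_vars_Pi_pmf])
         (auto simp: measure_pmf.prob_space_axioms)
  qed (auto simp: X_def)
  have mu: "(\<Sum>i\<in>{1..N}. measure_pmf.expectation L (X i)) = real N * q"
    using EX by simp
  have le: "measure_pmf.prob L {x \<in> space (measure_pmf L). (\<Sum>i\<in>{1..N}. X i x) \<le> real N * q - real N * \<delta>}
     \<le> exp (-2 * (real N * \<delta>)^2 / (\<Sum>i\<in>{1..N}. (1 - 0)^2))"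
    using H.Hoeffding_ineq_le[of "real N * \<delta>"] d N unfolding mu by simp
  have qh: "qhat N s = (\<Sum>i\<in>{1..N}. X i s) / real N" for s
    unfolding qhat_def X_def by (intro arg_cong[where f="\<lambda>x. x / real N"] sum.cong) auto
  have set_eq: "{s. qhat N s \<le> q - \<delta>} = {x \<in> space (measure_pmf L). (\<Sum>i\<in>{1..N}. X i x) \<le> real N * q - real N * \<delta>}"
    using N by (auto simp: qh divide_simps algebra_simps)
  have "exp (-2 * (real N * \<delta>)^2 / (\<Sum>i\<in>{1..N}. (1 - 0)^2)) = exp (-2 * real N * \<delta>^2)"
    using N by (simp add: power2_eq_square)
  then show ?thesis using le set_eq unfolding L_def by simp
qed


theorem mainTheorem10:
  fixes A B Q R q \<beta> P :: real and N :: nat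
  assumes "A \<noteq> 0" and "B \<noteq> 0" and "Q > 0" and "R > 0"
    and "0 < q" and "q < 1" and "q < qcrit A B Q R"
    and "0 < \<beta>" and "\<beta> < 1"
    and "P > 0" and "mare A B Q R q P"
    and "real N > ln (2 / \<beta>) * A^4 * B^4 * P^4 * (R + B^2 * P)^2
                  / (Q * (R + B^2 * P)^2 + (1 - q) * R * A^2 * B^2 * P^2)^2"
  shows "measure_pmf.prob (lam_law q {1..N})
           {s. qhat N s < qcrit A B Q R \<longrightarrow> ms_stabilizes q A B (gain A B Q R (qhat N s))}
         \<ge> 1 - \<beta>"
proof -
  note A0 = assms(1) and B0 = assms(2) and Q0 = assms(3) and R0 = assms(4)
    and q0 = assms(5) and q1 = assms(6) and P0 = assms(10) and mP = assms(11)
  define W where "W = R + B^2 * P"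
  define D where "D = Q * W^2 + (1 - q) * R * A^2 * B^2 * P^2"
  define \<delta> where "\<delta> = D / (A^2 * B^2 * P^2 * W)"
  have A2: "A^2 > 0" and B2: "B^2 > 0" using A0 B0 by simp_all
  have W0: "W > 0" unfolding W_def using R0 B2 P0 by (simp add: add_pos_nonneg)
  have D0: "D > 0" unfolding D_def using Q0 W0 q1 R0 A2 B2 P0
    by (intro add_pos_nonneg) (simp_all)
  have den0: "A^2 * B^2 * P^2 * W > 0" using A2 B2 P0 W0 by simp
  have d0: "\<delta> > 0" unfolding \<delta>_def using D0 den0 by simp
  have \<delta>_alt: "\<delta> = Q * W / (A^2 * B^2 * P^2) + (1 - q) * R / W"
    unfolding \<delta>_def D_def using A0 B0 P0 W0 by (simp add: field_simps power2_eq_square)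
  have ln0: "ln (2 / \<beta>) > 0" using assms(8,9) by simp
  have sq: "(A^2 * B^2 * P^2 * W)^2 = A^4 * B^4 * P^4 * W^2"
    by (simp add: power_mult_distrib flip: power_mult)
  have M: "ln (2 / \<beta>) * A^4 * B^4 * P^4 * (R + B^2 * P)^2
                  / (Q * (R + B^2 * P)^2 + (1 - q) * R * A^2 * B^2 * P^2)^2 = ln (2 / \<beta>) / \<delta>^2"
    unfolding W_def[symmetric] D_def[symmetric] \<delta>_def power_divide sq[symmetric] using D0 den0 sq by (simp add: mult.assoc)
  have Npos: "real N > 0" using assms(12) M ln0 d0 by (smt (verit) divide_pos_pos zero_less_power)
  have Nd: "real N * \<delta>^2 > ln (2 / \<beta>)"
    using assms(12) M d0 by (simp add: pos_divide_less_eq)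
  have lnb: "ln (2 / \<beta>) = ln 2 - ln \<beta>" using assms(8) by (simp add: ln_div)
  have "ln \<beta> < 0" using assms(8,9) by simp
  moreover have "ln 2 > (0::real)" by simp
  ultimately have "-2 * real N * \<delta>^2 \<le> ln \<beta>" using Nd lnb by linarith
  then have expb: "exp (-2 * real N * \<delta>^2) \<le> \<beta>" using assms(8)
    by (metis exp_le_cancel_iff exp_ln)
  have Nn: "N > 0" using Npos by simp
  have bad: "measure_pmf.prob (lam_law q {1..N}) {s. qhat N s \<le> q - \<delta>} \<le> \<beta>"
    using hoeff_lower[of q N \<delta>] q0 q1 Nn d0 expb by simp
  define T where "T = {s. qhat N s < qcrit A B Q R \<longrightarrow> ms_stabilizes q A B (gain A B Q R (qhat N s))}"
  have sub: "UNIV - {s. qhat N s \<le> q - \<delta>} \<subseteq> T"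
  proof
    fix s assume "s \<in> UNIV - {s. qhat N s \<le> q - \<delta>}"
    then have close: "q - qhat N s < \<delta>" by auto
    define p where "p = qhat N s"
    have p0: "0 \<le> p" unfolding p_def qhat_def by (intro divide_nonneg_nonneg sum_nonneg) auto
    show "s \<in> T" unfolding T_def
    proof (intro CollectI impI)
      assume "qhat N s < qcrit A B Q R"
      then have pc: "p < qcrit A B Q R" unfolding p_def .
      define X where "X = mare_sol A B Q R p"
      have X0: "X > 0" and mX: "mare A B Q R p X" using mare_sol_props[OF p0 pc] unfolding X_def by auto
      define V where "V = R + B^2 * X"
      have V0: "V > 0" unfolding V_def using R0 B2 X0 by (simp add: add_pos_nonneg)
      have g: "A + B * gain A B Q R p = A * R / V"
        unfolding gain_def X_def[symmetric] V_def[symmetric] using V0 unfolding V_def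
        by (simp add: field_simps power2_eq_square)
      have id: "X * V^2 * (1 - (q * A^2 + (1 - q) * (A * R / V)^2))
         = Q * V^2 + A^2 * B^2 * X^2 * ((1 - q) * R - (q - p) * V)"
        using rho_identity[OF X0 R0 mX, of q] unfolding V_def .
      have pos: "Q * V^2 + A^2 * B^2 * X^2 * ((1 - q) * R - (q - p) * V) > 0"
      proof (cases "q \<le> p")
        case True
        have "(1 - q) * R - (q - p) * V \<ge> 0" using True q1 R0 V0
          by (smt (verit) mult_nonneg_nonneg mult_nonpos_nonneg)
        then show ?thesis using Q0 V0 A2 B2 X0 by (intro add_pos_nonneg) simp_all
      next
        case False
        then have pq: "p < q" by simp
        have XP: "X \<le> P" using mare_mono[OF A0 B0 Q0 R0 pq q1 X0 P0 mX mP] .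
        have t1: "Q * W / (A^2 * B^2 * P^2) \<le> Q * V / (A^2 * B^2 * X^2)"
        proof -
          have "W * X^2 \<le> V * P^2"
          proof -
            have "R * X^2 \<le> R * P^2" using XP X0 R0 by (simp add: power_mono)
            moreover have "B^2 * P * X^2 \<le> B^2 * X * P^2"
            proof -
              have "0 \<le> B^2 * P * X" using X0 P0 B2 by simp
              from mult_left_mono[OF XP this] show ?thesis by (simp add: power2_eq_square ac_simps)
            qed
            ultimately show ?thesis unfolding W_def V_def by (simp add: algebra_simps)
          qed
          then have "W / P^2 \<le> V / X^2" using X0 P0 by (simp add: divide_simps)
          then have "Q * (W / P^2) \<le> Q * (V / X^2)"
            using Q0 by (intro mult_left_mono) auto
          then have "Q * (W / P^2) / (A^2 * B^2) \<le> Q * (V / X^2) / (A^2 * B^2)"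
            using A2 B2 by (intro divide_right_mono) auto
          then show ?thesis by (simp add: divide_divide_eq_left ac_simps)
        qed
        have t2: "(1 - q) * R / W \<le> (1 - q) * R / V"
        proof -
          have VW: "V \<le> W" unfolding V_def W_def using XP B2 by (simp add: mult_left_mono)
          show ?thesis using VW V0 W0 q1 R0 by (intro divide_left_mono) simp_all
        qed
        have "q - p < Q * V / (A^2 * B^2 * X^2) + (1 - q) * R / V"
          using close t1 t2 \<delta>_alt unfolding p_def by linarith
        then have "0 < A^2 * B^2 * X^2 * V * (Q * V / (A^2 * B^2 * X^2) + (1 - q) * R / V - (q - p))"
          using A2 B2 X0 V0 by simp
        also have "\<dots> = Q * V^2 + A^2 * B^2 * X^2 * ((1 - q) * R - (q - p) * V)"
          using A0 B0 X0 V0 by (simp add: field_simps power2_eq_square)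
        finally show ?thesis .
      qed
      have "q * A^2 + (1 - q) * (A * R / V)^2 < 1"
      proof -
        have "X * V^2 * (1 - (q * A^2 + (1 - q) * (A * R / V)^2)) > 0" using id pos by simp
        moreover have "X * V^2 > 0" using X0 V0 by simp
        ultimately show ?thesis by (simp add: zero_less_mult_iff)
      qed
      then have "ms_stabilizes q A B (gain A B Q R p)"
        using q0 q1 g by (intro ms_stab_lemma) simp_all
      then show "ms_stabilizes q A B (gain A B Q R (qhat N s))" unfolding p_def .
    qed
  qed
  have "1 - \<beta> \<le> 1 - measure_pmf.prob (lam_law q {1..N}) {s. qhat N s \<le> q - \<delta>}" using bad by simp
  also have "\<dots> = measure_pmf.prob (lam_law q {1..N}) (UNIV - {s. qhat N s \<le> q - \<delta>})"
    using measure_pmf.prob_compl[of "{s. qhat N s \<le> q - \<delta>}" "lam_law q {1..N}"] by simp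
  also have "\<dots> \<le> measure_pmf.prob (lam_law q {1..N}) T"
    using sub by (intro measure_pmf.finite_measure_mono) simp_all
  finally show ?thesis unfolding T_def .
qed

end
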